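(* Let $F$ be a maximal triangle-free graph and let $G$ be a triangle-free graph having the $F$-twin property. Let $H$ be a subgraph of $G$ isomorphic to $F$, let $z\in V(H)$ and let $z'\in V(G)\setminus V(H)$ be an $H$-twin of $z$, and set $H'=H(z')$. If a vertex $q'\in V(G)$ is an $H'$-twin of some $q\in V(H)\setminus\{z\}$, then $q'$ is also an $H$-twin of $q$.
   Context: $\mathrm N(v)$ denotes the neighbourhood of $v$ in $G$. For a subgraph $H$ of $G$, $q\in V(H)$ and $q'\in V(G)$, $q'$ is an $H$-twin of $q$ if $\mathrm N(q)\cap V(H)=\mathrm N(q')\cap V(H)$. For $q'\notin V(H)$ an $H$-twin of $q\in V(H)$, $H(q')$ denotes the graph obtained from $H$ by deleting $q$ and adding $q'$ together with all edges of $G$ between $q'$ and $V(H)\setminus\{q\}$ (this graph is isomorphic to $H$). For graphs $F,G$ and $e\in E(F)$, $G$ has the $(F,e)$-twin property if whenever $H\subseteq G$ is a subgraph isomorphic to $F$, $qz\in E(H)$ corresponds to $e$ under some isomorphism, and $q',z'\in V(G)$ are $H$-twins of $q,z$ respectively, then $q'z'\in E(G)$. $G$ has the $F$-twin property if it has the $(F,e)$-twin property for every $e\in E(F)$. A graph is maximal triangle-free if it contains no triangle but adding any new edge creates a triangle. *)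

theory Defs
  imports Main
begin

text \<open>A (finite simple) graph is a pair of a vertex set and a symmetric,
irreflexive edge relation on it (edges stored as ordered pairs, both orientations).\<close>

type_synonym 'a graph = "'a set \<times> ('a \<times> 'a) set"

abbreviation verts :: "'a graph \<Rightarrow> 'a set" where "verts G \<equiv> fst G"
abbreviation edges :: "'a graph \<Rightarrow> ('a \<times> 'a) set" where "edges G \<equiv> snd G"

definition wf_graph :: "'a graph \<Rightarrow> bool" where
  "wf_graph G \<longleftrightarrow> finite (verts G) \<and> edges G \<subseteq> verts G \<times> verts G
     \<and> sym (edges G) \<and> irrefl (edges G)"

definition nbhd :: "'a graph \<Rightarrow> 'a \<Rightarrow> 'a set" where
  "nbhd G v = {u. (v, u) \<in> edges G}"

definition subgraph :: "'a graph \<Rightarrow> 'a graph \<Rightarrow> bool" where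
  "subgraph H G \<longleftrightarrow> wf_graph H \<and> verts H \<subseteq> verts G \<and> edges H \<subseteq> edges G"

definition graph_iso :: "'b graph \<Rightarrow> 'a graph \<Rightarrow> ('b \<Rightarrow> 'a) \<Rightarrow> bool" where
  "graph_iso F H f \<longleftrightarrow> bij_betw f (verts F) (verts H)
     \<and> (\<forall>u\<in>verts F. \<forall>v\<in>verts F. (u, v) \<in> edges F \<longleftrightarrow> (f u, f v) \<in> edges H)"

definition isomorphic :: "'b graph \<Rightarrow> 'a graph \<Rightarrow> bool" where
  "isomorphic F H \<longleftrightarrow> (\<exists>f. graph_iso F H f)"

definition triangle_free :: "'a graph \<Rightarrow> bool" where
  "triangle_free G \<longleftrightarrow>
     \<not> (\<exists>a b c. (a, b) \<in> edges G \<and> (b, c) \<in> edges G \<and> (a, c) \<in> edges G)"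

definition add_edge :: "'a graph \<Rightarrow> 'a \<Rightarrow> 'a \<Rightarrow> 'a graph" where
  "add_edge G u v = (verts G, edges G \<union> {(u, v), (v, u)})"

definition maximal_triangle_free :: "'a graph \<Rightarrow> bool" where
  "maximal_triangle_free G \<longleftrightarrow> wf_graph G \<and> triangle_free G \<and>
     (\<forall>u\<in>verts G. \<forall>v\<in>verts G. u \<noteq> v \<and> (u, v) \<notin> edges G
        \<longrightarrow> \<not> triangle_free (add_edge G u v))"

definition H_twin :: "'a graph \<Rightarrow> 'a graph \<Rightarrow> 'a \<Rightarrow> 'a \<Rightarrow> bool" where
  "H_twin G H q q' \<longleftrightarrow> q \<in> verts H \<and> q' \<in> verts G \<and>
     nbhd G q \<inter> verts H = nbhd G q' \<inter> verts H"

text \<open>H(q'): delete q from H and add q' with all G-edges between q' and V(H) - {q}.\<close>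
definition twin_replace :: "'a graph \<Rightarrow> 'a graph \<Rightarrow> 'a \<Rightarrow> 'a \<Rightarrow> 'a graph" where
  "twin_replace G H q q' =
     (verts H - {q} \<union> {q'},
      {(a, b) \<in> edges H. a \<noteq> q \<and> b \<noteq> q}
      \<union> {(a, b) \<in> edges G. (a = q' \<and> b \<in> verts H - {q}) \<or> (b = q' \<and> a \<in> verts H - {q})})"

definition twin_property_edge :: "'b graph \<Rightarrow> 'a graph \<Rightarrow> 'b \<Rightarrow> 'b \<Rightarrow> bool" where
  "twin_property_edge F G a b \<longleftrightarrow>
     (\<forall>H f q z q' z'. subgraph H G \<longrightarrow> graph_iso F H f \<longrightarrow> {q, z} = {f a, f b}
        \<longrightarrow> H_twin G H q q' \<longrightarrow> H_twin G H z z' \<longrightarrow> (q', z') \<in> edges G)"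

definition twin_property :: "'b graph \<Rightarrow> 'a graph \<Rightarrow> bool" where
  "twin_property F G \<longleftrightarrow> (\<forall>(a, b) \<in> edges F. twin_property_edge F G a b)"

end

theory Submission
  imports Defs
begin

lemma mtf_common:
  assumes "maximal_triangle_free F" "u \<in> verts F" "v \<in> verts F" "u \<noteq> v" "(u,v) \<notin> edges F"
  shows "\<exists>w. (u,w) \<in> edges F \<and> (v,w) \<in> edges F"
proof -
  have tf: "triangle_free F" and s: "sym (edges F)" and nt: "\<not> triangle_free (add_edge F u v)"
    using assms unfolding maximal_triangle_free_def wf_graph_def by auto
  then obtain a b c where t: "(a,b) \<in> edges F \<union> {(u,v),(v,u)}" "(b,c) \<in> edges F \<union> {(u,v),(v,u)}"
      "(a,c) \<in> edges F \<union> {(u,v),(v,u)}"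
    unfolding triangle_free_def add_edge_def by auto
  have sy: "\<And>x y. (x,y) \<in> edges F \<Longrightarrow> (y,x) \<in> edges F" using s by (meson symD)
  have ir: "\<And>x. (x,x) \<notin> edges F" using assms(1) unfolding maximal_triangle_free_def wf_graph_def irrefl_def by auto
  have nb: "\<not> ((a,b) \<in> edges F \<and> (b,c) \<in> edges F \<and> (a,c) \<in> edges F)"
    using tf unfolding triangle_free_def by blast
  show ?thesis
  proof (cases "(a,b) \<in> edges F")
    case ab: True
    show ?thesis
    proof (cases "(b,c) \<in> edges F")
      case True
      then have "(a,c) \<in> {(u,v),(v,u)}" using t nb ab by blast
      then show ?thesis using ab True sy by blast
    next
      case False
      then have bc: "(b,c) \<in> {(u,v),(v,u)}" using t by blast
      have "(a,c) \<in> edges F"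
      proof (rule ccontr)
        assume "(a,c) \<notin> edges F"
        then have "(a,c) \<in> {(u,v),(v,u)}" using t by blast
        then show False using bc ab ir assms(4) by auto
      qed
      then show ?thesis using ab bc sy by blast
    qed
  next
    case False
    then have ab: "(a,b) \<in> {(u,v),(v,u)}" using t by blast
    have bc: "(b,c) \<in> edges F"
    proof (rule ccontr)
      assume "(b,c) \<notin> edges F"
      then have "(b,c) \<in> {(u,v),(v,u)}" using t by blast
      then have "a = c" using ab assms(4) by auto
      then show False using t(3) ir assms(4) by auto
    qed
    have ac: "(a,c) \<in> edges F"
    proof (rule ccontr)
      assume "(a,c) \<notin> edges F"
      then have "(a,c) \<in> {(u,v),(v,u)}" using t by blast
      then have "b = c" using ab assms(4) by auto
      then show False using bc ir by auto
    qed
    show ?thesis using ab bc ac sy by blast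
  qed
qed

lemma iso_common:
  assumes "maximal_triangle_free F" "graph_iso F H f" "a \<in> verts H" "b \<in> verts H" "a \<noteq> b"
    "(a,b) \<notin> edges H"
  shows "\<exists>w \<in> verts H. (a,w) \<in> edges H \<and> (b,w) \<in> edges H"
proof -
  have bij: "bij_betw f (verts F) (verts H)" and ed: "\<forall>u\<in>verts F. \<forall>v\<in>verts F. (u, v) \<in> edges F \<longleftrightarrow> (f u, f v) \<in> edges H"
    using assms(2) unfolding graph_iso_def by auto
  obtain u where u: "u \<in> verts F" "f u = a" using bij assms(3) by (metis bij_betw_imp_surj_on imageE)
  obtain v where v: "v \<in> verts F" "f v = b" using bij assms(4) by (metis bij_betw_imp_surj_on imageE)
  have "u \<noteq> v" using u v assms(5) by blast
  moreover have "(u,v) \<notin> edges F" using ed[rule_format, OF u(1) v(1)] u(2) v(2) assms(6) by simp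
  ultimately obtain w where w: "(u,w) \<in> edges F" "(v,w) \<in> edges F"
    using mtf_common[OF assms(1) u(1) v(1)] by blast
  have wfF: "wf_graph F" using assms(1) unfolding maximal_triangle_free_def by blast
  then have "edges F \<subseteq> verts F \<times> verts F" unfolding wf_graph_def by blast
  then have wF: "w \<in> verts F" using w by blast
  have fw: "f w \<in> verts H" using bij_betw_apply[OF bij wF] .
  have "(a, f w) \<in> edges H" using ed[rule_format, OF u(1) wF] w(1) u(2) by simp
  moreover have "(b, f w) \<in> edges H" using ed[rule_format, OF v(1) wF] w(2) v(2) by simp
  ultimately show ?thesis using fw by blast
qed

theorem lemma2p3:
  fixes F :: "'b graph" and G H H' :: "'a graph"
  assumes "maximal_triangle_free F"
    and "wf_graph G" and "triangle_free G" and "twin_property F G"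
    and "subgraph H G" and "isomorphic F H"
    and "z \<in> verts H" and "z' \<in> verts G - verts H" and "H_twin G H z z'"
    and "H' = twin_replace G H z z'"
    and "q \<in> verts H - {z}" and "H_twin G H' q q'"
  shows "H_twin G H q q'"
proof -
  obtain f where f: "graph_iso F H f" using assms(6) unfolding isomorphic_def by auto
  have HG: "edges H \<subseteq> edges G" "verts H \<subseteq> verts G" and wfH: "wf_graph H"
    using assms(5) unfolding subgraph_def by auto
  have symG: "\<And>x y. (x,y) \<in> edges G \<Longrightarrow> (y,x) \<in> edges G" using assms(2)
    unfolding wf_graph_def by (meson symD)
  have irG: "\<And>x. (x,x) \<notin> edges G" using assms(2) unfolding wf_graph_def irrefl_def by auto
  have symH: "\<And>x y. (x,y) \<in> edges H \<Longrightarrow> (y,x) \<in> edges H" using wfH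
    unfolding wf_graph_def by (meson symD)
  have EH: "edges H \<subseteq> verts H \<times> verts H" "finite (verts H)" using wfH unfolding wf_graph_def by auto
  have tf: "\<And>a b c. (a,b) \<in> edges G \<Longrightarrow> (b,c) \<in> edges G \<Longrightarrow> (a,c) \<in> edges G \<Longrightarrow> False"
    using assms(3) unfolding triangle_free_def by blast
  have induced: "(a,b) \<in> edges H" if th: "a \<in> verts H" "b \<in> verts H" "(a,b) \<in> edges G" for a b
  proof (rule ccontr)
    assume na: "(a,b) \<notin> edges H"
    have "a \<noteq> b" using irG th by auto
    then obtain w where "w \<in> verts H" "(a,w) \<in> edges H" "(b,w) \<in> edges H"
      using iso_common[OF assms(1) f th(1,2) _ na] by auto
    then show False using tf[of a b w] th HG by auto
  qed
  have qH: "q \<in> verts H" "q \<noteq> z" using assms(11) by auto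
  have H'v: "verts H' = verts H - {z} \<union> {z'}" using assms(10) unfolding twin_replace_def by auto
  have tw': "nbhd G q \<inter> verts H' = nbhd G q' \<inter> verts H'" and q'G: "q' \<in> verts G"
    using assms(12) unfolding H_twin_def by auto
  have twz: "nbhd G z \<inter> verts H = nbhd G z' \<inter> verts H" using assms(9) unfolding H_twin_def by auto
  have z'nH: "z' \<notin> verts H" using assms(8) by auto
  have A: "(q,x) \<in> edges G \<longleftrightarrow> (q',x) \<in> edges G" if "x \<in> verts H" "x \<noteq> z" for x
    using tw' that H'v unfolding nbhd_def by blast
  have B: "(q,z') \<in> edges G \<longleftrightarrow> (q',z') \<in> edges G"
    using tw' H'v unfolding nbhd_def by blast
  have C: "(z,x) \<in> edges G \<longleftrightarrow> (z',x) \<in> edges G" if "x \<in> verts H" for x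
    using twz that unfolding nbhd_def by blast
  have key: "(q,z) \<in> edges G \<longleftrightarrow> (q',z) \<in> edges G"
  proof
    assume qz: "(q,z) \<in> edges G"
    have qzH: "(q,z) \<in> edges H" using induced[OF qH(1) assms(7) qz] .
    have qz': "(q,z') \<in> edges G" using C[OF qH(1)] qz symG by blast
    define f' where "f' = (\<lambda>x. if f x = z then z' else f x)"
    have bij: "bij_betw f (verts F) (verts H)" and ed: "\<forall>u\<in>verts F. \<forall>v\<in>verts F. (u, v) \<in> edges F \<longleftrightarrow> (f u, f v) \<in> edges H"
      using f unfolding graph_iso_def by auto
    have inj: "inj_on f (verts F)" and img: "f ` verts F = verts H" using bij unfolding bij_betw_def by auto
    have E'def: "edges H' = {(a, b) \<in> edges H. a \<noteq> z \<and> b \<noteq> z}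
      \<union> {(a, b) \<in> edges G. (a = z' \<and> b \<in> verts H - {z}) \<or> (b = z' \<and> a \<in> verts H - {z})}"
      using assms(10) unfolding twin_replace_def by auto
    have sub': "subgraph H' G"
      unfolding subgraph_def wf_graph_def
    proof (intro conjI)
      show "finite (verts H')" using H'v EH by auto
      show "edges H' \<subseteq> verts H' \<times> verts H'" using E'def H'v EH by auto
      show "sym (edges H')" unfolding sym_def E'def using symH symG by blast
      show "irrefl (edges H')" unfolding irrefl_def E'def using irG HG by auto
      show "verts H' \<subseteq> verts G" using H'v HG assms(8) by auto
      show "edges H' \<subseteq> edges G" using E'def HG by auto
    qed
    have P1: "(z',b) \<in> edges H' \<longleftrightarrow> (z',b) \<in> edges G" if "b \<in> verts H" "b \<noteq> z" for b
      using that z'nH EH unfolding E'def by auto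
    have P2: "(b,z') \<in> edges H' \<longleftrightarrow> (b,z') \<in> edges G" if "b \<in> verts H" "b \<noteq> z" for b
      using that z'nH EH unfolding E'def by auto
    have P3: "(a,b) \<in> edges H' \<longleftrightarrow> (a,b) \<in> edges H" if "a \<in> verts H" "b \<in> verts H" "a \<noteq> z" "b \<noteq> z" for a b
      using that z'nH unfolding E'def by blast
    have P4: "(x,x) \<notin> edges H'" for x using sub' irG unfolding subgraph_def by blast
    have iso': "graph_iso F H' f'"
      unfolding graph_iso_def
    proof (intro conjI ballI)
      show "bij_betw f' (verts F) (verts H')"
        unfolding bij_betw_def
      proof
        show "inj_on f' (verts F)" unfolding inj_on_def f'_def
          using inj z'nH img unfolding inj_on_def by (auto split: if_splits)
        show "f' ` verts F = verts H'" unfolding H'v f'_def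
        proof
          show "(\<lambda>x. if f x = z then z' else f x) ` verts F \<subseteq> verts H - {z} \<union> {z'}" using img by auto
          show "verts H - {z} \<union> {z'} \<subseteq> (\<lambda>x. if f x = z then z' else f x) ` verts F"
          proof
            fix y assume y: "y \<in> verts H - {z} \<union> {z'}"
            show "y \<in> (\<lambda>x. if f x = z then z' else f x) ` verts F"
            proof (cases "y = z'")
              case True
              obtain x where "x \<in> verts F" "f x = z" using img assms(7) by (metis imageE)
              then show ?thesis using True by (intro image_eqI[of _ _ x]) auto
            next
              case False
              then have "y \<in> verts H" "y \<noteq> z" using y by auto
              then obtain x where "x \<in> verts F" "f x = y" using img by (metis imageE)
              then show ?thesis using \<open>y \<noteq> z\<close> by (intro image_eqI[of _ _ x]) auto
            qed
          qed
        qed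
      qed
    next
      fix u v assume u: "u \<in> verts F" and v: "v \<in> verts F"
      have fu: "f u \<in> verts H" and fv: "f v \<in> verts H" using u v img by auto
      have e: "(u,v) \<in> edges F \<longleftrightarrow> (f u, f v) \<in> edges H" using ed u v by auto
      show "(u, v) \<in> edges F \<longleftrightarrow> (f' u, f' v) \<in> edges H'"
      proof (cases "f u = z")
        case True note fuz = True
        show ?thesis
        proof (cases "f v = z")
          case True
          then have "u = v" using fuz inj u v unfolding inj_on_def by auto
          then show ?thesis using e irG HG P4 by blast
        next
          case False
          have "(f u, f v) \<in> edges H \<longleftrightarrow> (z', f v) \<in> edges G"
            using fuz C[OF fv] induced[OF assms(7) fv] HG by blast
          then show ?thesis using e fuz False fv P1[OF fv False] unfolding f'_def by simp
        qed
      next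
        case False note fuz = False
        show ?thesis
        proof (cases "f v = z")
          case True
          have "(f u, f v) \<in> edges H \<longleftrightarrow> (f u, z') \<in> edges G"
            using True C[OF fu] induced[OF fu assms(7)] HG symG by blast
          then show ?thesis using e fuz True fu P2[OF fu fuz] unfolding f'_def by simp
        next
          case False
          then show ?thesis using e fuz False P3[OF fu fv fuz False] unfolding f'_def by simp
        qed
      qed
    qed
    obtain u0 v0 where uv: "u0 \<in> verts F" "v0 \<in> verts F" "f u0 = q" "f v0 = z"
      using img qH assms(7) by (metis imageE)
    have Fe: "(u0, v0) \<in> edges F" using ed uv qzH by auto
    have f'q: "f' u0 = q" "f' v0 = z'" using uv qH unfolding f'_def by auto
    have tp: "twin_property_edge F G u0 v0" using assms(4) Fe unfolding twin_property_def by auto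
    have tq: "H_twin G H' q q'" by (rule assms(12))
    have tz: "H_twin G H' z' z"
      unfolding H_twin_def
    proof (intro conjI)
      show "z' \<in> verts H'" using H'v by auto
      show "z \<in> verts G" using assms(7) HG by auto
      show "nbhd G z' \<inter> verts H' = nbhd G z \<inter> verts H'"
      proof -
        have "(z, z') \<notin> edges G" using C[OF assms(7)] irG symG by blast
        then show ?thesis using twz H'v irG symG unfolding nbhd_def by blast
      qed
    qed
    have qs: "{q, z'} = {f' u0, f' v0}" using f'q by simp
    have "(q', z) \<in> edges G"
      using tp[unfolded twin_property_edge_def, rule_format, OF sub' iso' qs tq tz] .
    then show "(q',z) \<in> edges G" .
  next
    assume q'z: "(q',z) \<in> edges G"
    show "(q,z) \<in> edges G"
    proof (rule ccontr)
      assume nqz: "(q,z) \<notin> edges G"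
      then have "(q,z) \<notin> edges H" using HG by auto
      then obtain w where w: "w \<in> verts H" "(q,w) \<in> edges H" "(z,w) \<in> edges H"
        using iso_common[OF assms(1) f qH(1) assms(7) qH(2)] by auto
      have "w \<noteq> z" using w HG irG by auto
      then have "(q',w) \<in> edges G" using A[OF w(1)] w HG by auto
      then show False using tf[of z q' w] q'z symG w HG by auto
    qed
  qed
  show ?thesis unfolding H_twin_def
  proof (intro conjI)
    show "q \<in> verts H" by (rule qH(1))
    show "q' \<in> verts G" by (rule q'G)
    show "nbhd G q \<inter> verts H = nbhd G q' \<inter> verts H"
      using A key unfolding nbhd_def by auto
  qed
qed

end
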